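(* Consider a connected one-dimensional network of $m$ springs on $n$ nodes with kinematic matrix $D$ and $q$ displacement-controlled loadings with incidence matrix $R$ satisfying $\mathrm{rank}(R^\top D)=q$. Assume $q=n-2$ and that no spring is blocked by the displacement-controlled loadings. Then for every $x\in U\setminus\{0\}$, where $U=\{x\in D\mathbb{R}^n:R^\top x=0\}$, one has $x_i\neq0$ for all $i\in\{1,\dots,m\}$.
   Context: Spring $k$ joins left node $i_k$ to right node $j_k\neq i_k$; the graph is connected; $D$ is the $m\times n$ matrix with $(D\xi)_k=\xi_{j_k}-\xi_{i_k}$. Displacement-controlled loading $k$ prescribes $\xi_{J_k}-\xi_{I_k}=l_k(t)$; $R^k\in\{-1,0,1\}^m$ is the signed incidence vector of a chain of springs from $I_k$ to $J_k$, so $(R^k)^\top D\xi=\xi_{J_k}-\xi_{I_k}$; $R=(R^1,\dots,R^q)$. A spring $i$ is blocked by the displacement-controlled loadings if the family of pairs $\{I_k,J_k\}$, $k=1,\dots,q$, contains a chain connecting one endpoint of spring $i$ with its other endpoint. *)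

theory Defs
  imports "HOL-Analysis.Analysis"
begin

text \<open>Nodes are the elements of a finite type 'n, springs of a finite type 'm,
  displacement-controlled loadings of a finite type 'q.  Spring k joins the
  left node a k to the right node b k.\<close>

definition spring_edges :: "('m \<Rightarrow> 'n) \<Rightarrow> ('m \<Rightarrow> 'n) \<Rightarrow> ('n \<times> 'n) set" where
  "spring_edges a b = {(a k, b k) | k. True}"

definition network_connected :: "('m \<Rightarrow> 'n) \<Rightarrow> ('m \<Rightarrow> 'n) \<Rightarrow> bool" where
  "network_connected a b \<longleftrightarrow>
     (\<forall>u v. (u, v) \<in> (spring_edges a b \<union> (spring_edges a b)\<inverse>)\<^sup>*)"

definition kin_matrix :: "('m \<Rightarrow> 'n) \<Rightarrow> ('m \<Rightarrow> 'n) \<Rightarrow> real^'n^'m" where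
  "kin_matrix a b = (\<chi> k v. (if v = b k then 1 else 0) - (if v = a k then 1 else 0))"

text \<open>r is the signed incidence vector of a chain (simple path) of springs from
  node I to node J: nodes vs!0 = I, ..., vs!L = J, spring ss!t joins vs!t and
  vs!(t+1); its entry is +1 if traversed from its left to its right node, -1 if
  traversed backwards, and springs not in the chain get 0.\<close>
definition chain_incidence ::
  "('m \<Rightarrow> 'n) \<Rightarrow> ('m \<Rightarrow> 'n) \<Rightarrow> 'n \<Rightarrow> 'n \<Rightarrow> real^'m \<Rightarrow> bool" where
  "chain_incidence a b I J r \<longleftrightarrow>
     (\<exists>vs ss. distinct vs \<and> length vs = Suc (length ss) \<and>
        hd vs = I \<and> last vs = J \<and>
        (\<forall>t < length ss. {a (ss ! t), b (ss ! t)} = {vs ! t, vs ! Suc t}) \<and>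
        (\<forall>s. r $ s = (\<Sum>t < length ss.
              if ss ! t = s then (if a s = vs ! t then 1 else -1) else 0)))"

definition loading_pairs :: "('q \<Rightarrow> 'n) \<Rightarrow> ('q \<Rightarrow> 'n) \<Rightarrow> ('n \<times> 'n) set" where
  "loading_pairs I J = {(I k, J k) | k. True}"

definition spring_blocked ::
  "('m \<Rightarrow> 'n) \<Rightarrow> ('m \<Rightarrow> 'n) \<Rightarrow> ('q \<Rightarrow> 'n) \<Rightarrow> ('q \<Rightarrow> 'n) \<Rightarrow> 'm \<Rightarrow> bool" where
  "spring_blocked a b I J s \<longleftrightarrow>
     (a s, b s) \<in> (loading_pairs I J \<union> (loading_pairs I J)\<inverse>)\<^sup>*"

end

theory Submission imports Defs begin

lemma delta_sum: "(\<Sum>j\<in>UNIV. (if j = c then 1 else 0) * (v $ j::real)) = v $ c"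
proof -
  have "(\<Sum>j\<in>UNIV. (if j = c then 1 else 0) * (v $ j::real)) = (\<Sum>j\<in>UNIV. if j = c then v $ j else 0)"
    by (intro sum.cong refl) auto
  then show ?thesis by simp
qed

lemma kin_apply: "(kin_matrix a b *v v) $ k = v $ b k - v $ a k"
  by (simp add: delta_sum kin_matrix_def matrix_vector_mult_def left_diff_distrib sum_subtractf)

lemma trR_apply: "(transpose R *v y) $ k = (\<Sum>s\<in>UNIV. column k R $ s * y $ s)"
  by (simp add: transpose_def matrix_vector_mult_def column_def)

lemma chain_sum:
  assumes ends: "\<And>k. a k \<noteq> b k" and ch: "chain_incidence a b I J r"
  shows "(\<Sum>s\<in>UNIV. r $ s * (v $ b s - v $ a s)) = v $ J - v $ I"
proof -
  obtain vs ss where d: "distinct vs" "length vs = Suc (length ss)" "hd vs = I" "last vs = J"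
    and e: "\<forall>t < length ss. {a (ss ! t), b (ss ! t)} = {vs ! t, vs ! Suc t}"
    and r: "\<forall>s. r $ s = (\<Sum>t < length ss.
              if ss ! t = s then (if a s = vs ! t then 1 else -1) else 0)"
    using ch unfolding chain_incidence_def by blast
  define L where "L = length ss"
  define sg where "sg s t = (if a s = vs ! t then 1 else -1::real)" for s t
  have "(\<Sum>s\<in>UNIV. r $ s * (v $ b s - v $ a s)) = (\<Sum>s\<in>UNIV. \<Sum>t<L. (if ss ! t = s then sg s t * (v $ b s - v $ a s) else 0))"
    unfolding L_def
    apply (rule sum.cong[OF refl])
    apply (simp only: r sum_distrib_right)
    apply (rule sum.cong[OF refl])
    by (auto simp: sg_def)
  also have "\<dots> = (\<Sum>t<L. \<Sum>s\<in>UNIV. (if ss ! t = s then sg s t * (v $ b s - v $ a s) else 0))"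
    by (rule sum.swap)
  also have "\<dots> = (\<Sum>t<L. sg (ss!t) t * (v $ b (ss!t) - v $ a (ss!t)))"
    by simp
  also have "\<dots> = (\<Sum>t<L. v $ (vs ! Suc t) - v $ (vs ! t))"
  proof (rule sum.cong[OF refl])
    fix t assume "t \<in> {..<L}"
    then have E: "{a (ss ! t), b (ss ! t)} = {vs ! t, vs ! Suc t}" using e L_def by auto
    have ab: "a (ss!t) \<noteq> b (ss!t)" using ends by blast
    show "sg (ss!t) t * (v $ b (ss!t) - v $ a (ss!t)) = v $ (vs ! Suc t) - v $ (vs ! t)"
    proof (cases "a (ss!t) = vs ! t")
      case True
      then have "b (ss!t) = vs ! Suc t" using E ab by (metis doubleton_eq_iff)
      then show ?thesis using True by (simp add: sg_def)
    next
      case False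
      then have "a (ss!t) = vs ! Suc t" "b (ss!t) = vs ! t" using E ab by (metis doubleton_eq_iff)+
      then show ?thesis using False by (simp add: sg_def)
    qed
  qed
  also have "\<dots> = v $ (vs ! L) - v $ (vs ! 0)"
    by (rule sum_lessThan_telescope)
  also have "vs ! L = J" using d L_def by (metis diff_Suc_1 last_conv_nth list.size(3) nat.distinct(1))
  also have "vs ! 0 = I" using d by (metis hd_conv_nth list.size(3) nat.distinct(1))
  finally show ?thesis .
qed

lemma rank_kernel:
  fixes M :: "real^'n::finite^'q::finite"
  assumes U: "U \<subseteq> {v. M *v v = 0}" "independent U"
  shows "rank M + card U \<le> CARD('n)"
proof -
  define f where "f = (\<lambda>v. M *v v)"
  have lf: "linear f" unfolding f_def by (rule matrix_vector_mul_linear)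
  obtain B where B: "U \<subseteq> B" "independent B" "UNIV \<subseteq> span B"
    by (rule maximal_independent_subset_extend[OF subset_UNIV U(2)]) blast
  have fin: "finite B" using B(2) by (rule finiteI_independent)
  have cB: "card B = CARD('n)"
  proof -
    have "card B = dim (UNIV :: (real^'n) set)"
      using B by (intro basis_card_eq_dim) auto
    then show ?thesis by simp
  qed
  have finU: "finite U" using fin B(1) finite_subset by blast
  have "rank M = dim (range f)" unfolding f_def by (rule rank_dim_range)
  also have "range f = span (f ` B)"
  proof -
    have "span B = UNIV" using B(3) by auto
    then have "range f = f ` span B" by simp
    then show ?thesis by (simp add: span_linear_image[OF lf])
  qed
  also have "dim (span (f ` B)) = dim (f ` B)" by (rule dim_span)
  also have "\<dots> \<le> dim (insert 0 (f ` (B - U)))"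
  proof (rule dim_subset)
    show "f ` B \<subseteq> insert 0 (f ` (B - U))" using U(1) unfolding f_def by auto
  qed
  also have "\<dots> = dim (f ` (B - U))"
    by (metis dim_span span_insert_0)
  also have "\<dots> \<le> card (f ` (B - U))"
    using fin by (intro dim_le_card span_superset finite_imageI finite_Diff)
  also have "\<dots> \<le> card (B - U)" using fin by (simp add: card_image_le)
  also have "\<dots> = card B - card U" using B(1) finU by (simp add: card_Diff_subset)
  finally have r: "rank M \<le> card B - card U" .
  have "card U \<le> card B" by (rule card_mono[OF fin B(1)])
  then show ?thesis using r cB by linarith
qed


theorem lemma2:
  fixes a b :: "'m::finite \<Rightarrow> 'n::finite"
    and I J :: "'q::finite \<Rightarrow> 'n"
    and R :: "real^'q^'m"
  assumes ends: "\<And>k. a k \<noteq> b k"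
    and conn: "network_connected a b"
    and Rchain: "\<And>k. chain_incidence a b (I k) (J k) (column k R)"
    and rk: "rank (transpose R ** kin_matrix a b) = CARD('q)"
    and q: "CARD('q) = CARD('n) - 2"
    and unblocked: "\<And>s. \<not> spring_blocked a b I J s"
    and x: "x \<in> {y \<in> range (\<lambda>\<xi>. kin_matrix a b *v \<xi>). transpose R *v y = 0}"
    and nz: "x \<noteq> 0"
  shows "\<forall>i. x $ i \<noteq> 0"
proof (rule ccontr)
  assume "\<not> (\<forall>i. x $ i \<noteq> 0)"
  then obtain i where xi: "x $ i = 0" by blast
  define D where "D = kin_matrix a b"
  define M where "M = transpose R ** D"
  have Mapp: "(M *v v) $ k = v $ J k - v $ I k" for v k
  proof -
    have "M *v v = transpose R *v (D *v v)" unfolding M_def by (simp add: matrix_vector_mul_assoc)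
    then have "(M *v v) $ k = (\<Sum>s\<in>UNIV. column k R $ s * (v $ b s - v $ a s))"
      by (simp only: trR_apply kin_apply D_def)
    also have "\<dots> = v $ J k - v $ I k" by (rule chain_sum[OF ends Rchain])
    finally show ?thesis .
  qed
  have K: "M *v v = 0 \<longleftrightarrow> (\<forall>k. v $ I k = v $ J k)" for v
    by (auto simp add: vec_eq_iff Mapp)
  obtain \<xi> where xd: "x = D *v \<xi>" and Rx: "transpose R *v x = 0" using x D_def by auto
  have \<xi>K: "M *v \<xi> = 0" using Rx xd unfolding M_def by (simp add: matrix_vector_mul_assoc)
  have xk: "x $ k = \<xi> $ b k - \<xi> $ a k" for k using xd by (simp add: kin_apply D_def)
  have \<xi>i: "\<xi> $ a i = \<xi> $ b i" using xi xk[of i] by simp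
  define E where "E = loading_pairs I J \<union> (loading_pairs I J)\<inverse>"
  define C where "C = {w. (a i, w) \<in> E\<^sup>*}"
  define c :: "real^'n" where "c = (\<chi> w. if w \<in> C then 1 else 0)"
  define one :: "real^'n" where "one = (\<chi> w. 1)"
  have aC: "a i \<in> C" unfolding C_def by simp
  have bC: "b i \<notin> C" using unblocked[of i] unfolding C_def E_def spring_blocked_def by simp
  have edge: "(I k, J k) \<in> E" "(J k, I k) \<in> E" for k unfolding E_def loading_pairs_def by auto
  have IJC: "I k \<in> C \<longleftrightarrow> J k \<in> C" for k
    unfolding C_def using rtrancl_into_rtrancl[OF _ edge(1)[of k]] rtrancl_into_rtrancl[OF _ edge(2)[of k]] by blast
  have cK: "M *v c = 0" unfolding K c_def using IJC by simp
  have oneK: "M *v one = 0" unfolding K one_def by simp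
  have ca: "c $ a i = 1" and cb: "c $ b i = 0" using aC bC by (auto simp: c_def)
  have one1: "one $ w = 1" for w by (simp add: one_def)
  have c0: "c \<noteq> 0" using ca by auto
  have one_ns: "one \<notin> span {c}"
  proof
    assume "one \<in> span {c}"
    then obtain k where "one = k *\<^sub>R c" by (auto simp: span_singleton)
    then have "one $ b i = k * c $ b i" by simp
    then show False using cb one1 by simp
  qed
  have \<xi>ns: "\<xi> \<notin> span {one, c}"
  proof
    assume "\<xi> \<in> span {one, c}"
    then obtain \<alpha> \<beta> where e: "\<xi> - \<alpha> *\<^sub>R one = \<beta> *\<^sub>R c"
      by (auto simp: span_insert span_singleton)
    have "\<xi> $ a i - \<alpha> = \<beta>" using arg_cong[OF e, of "\<lambda>v. v $ a i"] ca one1 by simp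
    moreover have "\<xi> $ b i - \<alpha> = 0" using arg_cong[OF e, of "\<lambda>v. v $ b i"] cb one1 by simp
    ultimately have "\<beta> = 0" using \<xi>i by simp
    then have "\<xi> = \<alpha> *\<^sub>R one" using e by simp
    then have "x = 0" using xk by (simp add: vec_eq_iff one1)
    then show False using nz by simp
  qed
  have s1: "one \<in> span {one, c}" "c \<in> span {one, c}" "c \<in> span {c}"
    by (simp_all add: span_base)
  have dist: "\<xi> \<noteq> one" "\<xi> \<noteq> c" "one \<noteq> c"
    using \<xi>ns one_ns s1 by metis+
  have i1: "independent {c}" using c0 by simp
  have i2: "independent {one, c}" using i1 one_ns dist(3) by (simp add: independent_insert)
  have indep: "independent {\<xi>, one, c}" using i2 \<xi>ns dist(1,2) by (simp add: independent_insert)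
  have card3: "card {\<xi>, one, c} = 3" using dist by simp
  have sub: "{\<xi>, one, c} \<subseteq> {v. M *v v = 0}" using \<xi>K oneK cK by auto
  have "rank M + 3 \<le> CARD('n)" using rank_kernel[OF sub indep] card3 by simp
  moreover have "rank M = CARD('n) - 2" using rk q M_def D_def by simp
  moreover have "CARD('q) \<ge> 1" by (simp add: Suc_leI)
  ultimately show False using q by linarith
qed

end
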